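(* Let $G_{\lambda,k}$ be a skeleton of a graph $G$ such that $G_{(\lambda,k)_{(2,2)}}$ contains an $M$-fat $H$ minor for some $M\ge6$. Then $G_{\lambda,k}$ contains an $(M+1)$-fat $H$ minor.
   Context: All graphs are connected (and unbounded); $d$ is the graph metric. Sets $X,Y$ are $r$-disjoint if $d(a,b)>r$ for all $a\in X,b\in Y$; $X$ is $k$-connected if any two of its points are joined by a finite sequence in $X$ with consecutive distances $\le k$. $H$ is an $M$-fat minor of a graph $\Gamma$ if there are connected subgraphs $B_v$ ($v\in V(H)$) and paths $P_e$ ($e\in E(H)$), $P_e$ joining $B_u$ to $B_v$ for $e=uv$, any two of which are $M$-disjoint unless they correspond to an incident vertex–edge pair of $H$. Skeleton $\Gamma_{\lambda,k}$ of a connected graph $\Gamma$ (root $x_0$, scale $\lambda\ge1$, connectivity $k\ge1$): layers $A_{N,\lambda}=\{x: N\lambda<d(x,x_0)\le(N+1)\lambda\}$, $N\in\mathbb Z$; blocks are maximal $k$-connected subsets of layers; $\Gamma_{\lambda,k}$ has a vertex per block and an edge between two blocks iff an edge of $\Gamma$ joins them. $G_{(\lambda,k)_{(2,2)}}$ is the $(2,2)$-skeleton of the graph $G_{\lambda,k}$, rooted at the block containing the root of $G$. *)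

theory Defs
  imports Complex_Main
begin

definition graph :: "'a set \<Rightarrow> ('a \<Rightarrow> 'a \<Rightarrow> bool) \<Rightarrow> bool" where
  "graph V E \<longleftrightarrow> (\<forall>x y. E x y \<longrightarrow> x \<in> V \<and> y \<in> V) \<and> (\<forall>x y. E x y \<longrightarrow> E y x) \<and> (\<forall>x. \<not> E x x)"

definition walk :: "'a set \<Rightarrow> ('a \<Rightarrow> 'a \<Rightarrow> bool) \<Rightarrow> 'a list \<Rightarrow> bool" where
  "walk V E p \<longleftrightarrow> p \<noteq> [] \<and> set p \<subseteq> V \<and> (\<forall>i < length p - 1. E (p ! i) (p ! (i + 1)))"

text \<open>Connectedness of (the subgraph induced on) V.\<close>
definition connected_graph :: "'a set \<Rightarrow> ('a \<Rightarrow> 'a \<Rightarrow> bool) \<Rightarrow> bool" where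
  "connected_graph V E \<longleftrightarrow> V \<noteq> {} \<and>
     (\<forall>x\<in>V. \<forall>y\<in>V. \<exists>p. walk V E p \<and> hd p = x \<and> last p = y)"

definition gdist :: "'a set \<Rightarrow> ('a \<Rightarrow> 'a \<Rightarrow> bool) \<Rightarrow> 'a \<Rightarrow> 'a \<Rightarrow> nat" where
  "gdist V E x y = (LEAST n. \<exists>p. walk V E p \<and> hd p = x \<and> last p = y \<and> length p = n + 1)"

definition unbounded_graph :: "'a set \<Rightarrow> ('a \<Rightarrow> 'a \<Rightarrow> bool) \<Rightarrow> 'a \<Rightarrow> bool" where
  "unbounded_graph V E x0 \<longleftrightarrow> (\<forall>n::nat. \<exists>x\<in>V. gdist V E x0 x > n)"

definition r_disjoint :: "'a set \<Rightarrow> ('a \<Rightarrow> 'a \<Rightarrow> bool) \<Rightarrow> real \<Rightarrow> 'a set \<Rightarrow> 'a set \<Rightarrow> bool" where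
  "r_disjoint V E r X Y \<longleftrightarrow> (\<forall>a\<in>X. \<forall>b\<in>Y. real (gdist V E a b) > r)"

definition k_connected :: "'a set \<Rightarrow> ('a \<Rightarrow> 'a \<Rightarrow> bool) \<Rightarrow> real \<Rightarrow> 'a set \<Rightarrow> bool" where
  "k_connected V E k X \<longleftrightarrow> (\<forall>x\<in>X. \<forall>y\<in>X. \<exists>p. p \<noteq> [] \<and> hd p = x \<and> last p = y \<and> set p \<subseteq> X \<and>
       (\<forall>i < length p - 1. real (gdist V E (p ! i) (p ! (i + 1))) \<le> k))"

definition simple_graph_sets :: "'b set \<Rightarrow> 'b set set \<Rightarrow> bool" where
  "simple_graph_sets VH EH \<longleftrightarrow> (\<forall>e\<in>EH. \<exists>u v. u \<noteq> v \<and> u \<in> VH \<and> v \<in> VH \<and> e = {u, v})"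

definition fat_minor :: "'a set \<Rightarrow> ('a \<Rightarrow> 'a \<Rightarrow> bool) \<Rightarrow> real \<Rightarrow> 'b set \<Rightarrow> 'b set set \<Rightarrow> bool" where
  "fat_minor V E M VH EH \<longleftrightarrow> (\<exists>(B :: 'b \<Rightarrow> 'a set) (P :: 'b set \<Rightarrow> 'a list).
     (\<forall>v\<in>VH. B v \<subseteq> V \<and> connected_graph (B v) E) \<and>
     (\<forall>e\<in>EH. walk V E (P e) \<and> distinct (P e) \<and>
        (\<exists>u v. e = {u, v} \<and> hd (P e) \<in> B u \<and> last (P e) \<in> B v)) \<and>
     (\<forall>u\<in>VH. \<forall>v\<in>VH. u \<noteq> v \<longrightarrow> r_disjoint V E M (B u) (B v)) \<and>
     (\<forall>e\<in>EH. \<forall>e'\<in>EH. e \<noteq> e' \<longrightarrow> r_disjoint V E M (set (P e)) (set (P e'))) \<and>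
     (\<forall>v\<in>VH. \<forall>e\<in>EH. v \<notin> e \<longrightarrow> r_disjoint V E M (B v) (set (P e))))"

definition layer :: "'a set \<Rightarrow> ('a \<Rightarrow> 'a \<Rightarrow> bool) \<Rightarrow> 'a \<Rightarrow> real \<Rightarrow> int \<Rightarrow> 'a set" where
  "layer V E x0 lam N = {x\<in>V. real_of_int N * lam < real (gdist V E x x0) \<and>
                                real (gdist V E x x0) \<le> (real_of_int N + 1) * lam}"

definition is_block :: "'a set \<Rightarrow> ('a \<Rightarrow> 'a \<Rightarrow> bool) \<Rightarrow> 'a \<Rightarrow> real \<Rightarrow> real \<Rightarrow> 'a set \<Rightarrow> bool" where
  "is_block V E x0 lam k S \<longleftrightarrow> (\<exists>N. S \<noteq> {} \<and> S \<subseteq> layer V E x0 lam N \<and> k_connected V E k S \<and>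
      (\<forall>T. S \<subseteq> T \<and> T \<subseteq> layer V E x0 lam N \<and> k_connected V E k T \<longrightarrow> T = S))"

definition skel_V :: "'a set \<Rightarrow> ('a \<Rightarrow> 'a \<Rightarrow> bool) \<Rightarrow> 'a \<Rightarrow> real \<Rightarrow> real \<Rightarrow> 'a set set" where
  "skel_V V E x0 lam k = {S. is_block V E x0 lam k S}"

definition skel_E :: "'a set \<Rightarrow> ('a \<Rightarrow> 'a \<Rightarrow> bool) \<Rightarrow> 'a \<Rightarrow> real \<Rightarrow> real \<Rightarrow> 'a set \<Rightarrow> 'a set \<Rightarrow> bool" where
  "skel_E V E x0 lam k S S' \<longleftrightarrow> S \<in> skel_V V E x0 lam k \<and> S' \<in> skel_V V E x0 lam k \<and> S \<noteq> S' \<and>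
      (\<exists>x\<in>S. \<exists>y\<in>S'. E x y)"

definition skel_root :: "'a set \<Rightarrow> ('a \<Rightarrow> 'a \<Rightarrow> bool) \<Rightarrow> 'a \<Rightarrow> real \<Rightarrow> real \<Rightarrow> 'a set" where
  "skel_root V E x0 lam k = (THE S. S \<in> skel_V V E x0 lam k \<and> x0 \<in> S)"

end

theory Submission
  imports Defs
begin


definition restr :: "('a \<Rightarrow> 'a \<Rightarrow> bool) \<Rightarrow> 'a set \<Rightarrow> 'a \<Rightarrow> 'a \<Rightarrow> bool" where
  "restr R X a b \<longleftrightarrow> a \<in> X \<and> b \<in> X \<and> R a b"

definition lchain :: "('a \<Rightarrow> 'a \<Rightarrow> bool) \<Rightarrow> 'a set \<Rightarrow> 'a list \<Rightarrow> bool" where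
  "lchain R X p \<longleftrightarrow> p \<noteq> [] \<and> set p \<subseteq> X \<and> (\<forall>i < length p - 1. R (p ! i) (p ! (i + 1)))"

lemma walk_lchain: "walk V E p = lchain E V p"
  by (simp add: walk_def lchain_def)

lemma lchain_Nil[simp]: "\<not> lchain R X []"
  by (simp add: lchain_def)

lemma lchain_single[simp]: "lchain R X [x] \<longleftrightarrow> x \<in> X"
  by (simp add: lchain_def)

lemma lchain_Cons2[simp]: "lchain R X (x#y#p) \<longleftrightarrow> x \<in> X \<and> R x y \<and> lchain R X (y#p)"
proof -
  have "(\<forall>i < length (x#y#p) - 1. R ((x#y#p) ! i) ((x#y#p) ! (i + 1))) \<longleftrightarrow>
        R x y \<and> (\<forall>i < length (y#p) - 1. R ((y#p) ! i) ((y#p) ! (i + 1)))"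
    by (simp add: All_less_Suc2)
  then show ?thesis by (auto simp add: lchain_def)
qed

lemma lchain_Cons: "lchain R X (x#p) \<longleftrightarrow> x \<in> X \<and> (p = [] \<or> R x (hd p) \<and> lchain R X p)"
  by (cases p) auto

lemma lchain_mono: "lchain R X p \<Longrightarrow> set p \<subseteq> Y \<Longrightarrow> lchain R Y p"
  by (simp add: lchain_def)

lemma lchain_set: "lchain R X p \<Longrightarrow> set p \<subseteq> X"
  by (simp add: lchain_def)

lemma lchain_hdX: "lchain R X (x#p) \<Longrightarrow> x \<in> X"
  by (simp add: lchain_def)

lemma lchain_append: "lchain R X (xs @ y # ys) \<longleftrightarrow> lchain R X (xs @ [y]) \<and> lchain R X (y # ys)"
  by (induction xs rule: induct_list012) (auto dest: lchain_hdX)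

lemma lchain_relpow:
  "lchain R X p \<Longrightarrow> ((restr R X) ^^ (length p - 1)) (hd p) (last p) \<and> hd p \<in> X \<and> last p \<in> X"
proof (induction p)
  case Nil then show ?case by simp
next
  case (Cons a p)
  show ?case
  proof (cases p)
    case Nil then show ?thesis using Cons by simp
  next
    case (Cons b q)
    have "lchain R X p" "R a b" "a \<in> X" using Cons.prems Cons by auto
    then have ih: "((restr R X) ^^ (length p - 1)) b (last p)" "b \<in> X" "last p \<in> X"
      using Cons.IH Cons by auto
    then have "restr R X a b" using \<open>R a b\<close> \<open>a \<in> X\<close> by (simp add: restr_def)
    then have "((restr R X) ^^ Suc (length p - 1)) a (last p)"
      by (rule relpowp_Suc_I2[OF _ ih(1)])
    then show ?thesis using Cons \<open>a \<in> X\<close> ih by simp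
  qed
qed

lemma relpow_lchain:
  "((restr R X) ^^ n) x y \<Longrightarrow> x \<in> X \<Longrightarrow> \<exists>p. lchain R X p \<and> hd p = x \<and> last p = y \<and> length p = Suc n"
proof (induction n arbitrary: x)
  case 0 then show ?case by (intro exI[of _ "[x]"]) auto
next
  case (Suc n)
  then obtain z where z: "restr R X x z" "((restr R X) ^^ n) z y" using relpowp_Suc_D2 by metis
  have "z \<in> X" using z(1) by (simp add: restr_def)
  then obtain q where q: "lchain R X q" "hd q = z" "last q = y" "length q = Suc n"
    using Suc.IH[OF z(2)] by blast
  show ?case
    apply (intro exI[of _ "x # q"])
    using q z Suc.prems by (cases q) (auto simp: restr_def)
qed

lemma lchain_iff_rtranclp:
  assumes "x \<in> X"
  shows "(\<exists>p. lchain R X p \<and> hd p = x \<and> last p = y) \<longleftrightarrow> (restr R X)\<^sup>*\<^sup>* x y"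
proof
  assume "\<exists>p. lchain R X p \<and> hd p = x \<and> last p = y"
  then obtain p where p: "lchain R X p" "hd p = x" "last p = y" by blast
  have "((restr R X) ^^ (length p - 1)) x y" using lchain_relpow[OF p(1)] p(2,3) by simp
  then show "(restr R X)\<^sup>*\<^sup>* x y" by (rule relpowp_imp_rtranclp)
next
  assume h: "(restr R X)\<^sup>*\<^sup>* x y"
  have "\<exists>n. ((restr R X) ^^ n) x y" by (rule rtranclp_imp_relpowp[OF h])
  then obtain n where n: "((restr R X) ^^ n) x y" by (rule exE)
  have "\<exists>p. lchain R X p \<and> hd p = x \<and> last p = y \<and> length p = Suc n"
    by (rule relpow_lchain[OF n assms])
  then obtain p where p: "lchain R X p \<and> hd p = x \<and> last p = y \<and> length p = Suc n" by (rule exE)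
  show "\<exists>p. lchain R X p \<and> hd p = x \<and> last p = y"
    apply (rule exI[of _ p])
    using p by simp
qed

lemma lchain_distinct:
  "lchain R X p \<Longrightarrow> \<exists>q. lchain R X q \<and> distinct q \<and> hd q = hd p \<and> last q = last p \<and> set q \<subseteq> set p"
proof (induction "length p" arbitrary: p rule: less_induct)
  case less
  show ?case
  proof (cases "distinct p")
    case True then show ?thesis using less.prems by blast
  next
    case False
    then obtain xs ys zs y where p: "p = xs @ [y] @ ys @ [y] @ zs" using not_distinct_decomp by blast
    have "lchain R X (xs @ [y])" "lchain R X (y # ys @ y # zs)"
      using less.prems p lchain_append[of R X xs y "ys @ y # zs"] by auto
    moreover have "lchain R X (y # zs)"
      using calculation(2) lchain_append[of R X "y # ys" y zs] by simp
    ultimately have c: "lchain R X (xs @ y # zs)" using lchain_append by metis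
    have l: "length (xs @ y # zs) < length p" using p by simp
    obtain q where "lchain R X q" "distinct q" "hd q = hd (xs @ y # zs)" "last q = last (xs @ y # zs)"
        "set q \<subseteq> set (xs @ y # zs)"
      using less.hyps[OF l c] by blast
    moreover have "hd (xs @ y # zs) = hd p" using p by (cases xs) auto
    moreover have "last (xs @ y # zs) = last p" using p by (cases zs) auto
    moreover have "set (xs @ y # zs) \<subseteq> set p" using p by auto
    ultimately show ?thesis by (intro exI[of _ q]) auto
  qed
qed

lemma restr_mono: "X \<subseteq> Y \<Longrightarrow> (\<And>a b. R a b \<Longrightarrow> S a b) \<Longrightarrow> restr R X a b \<Longrightarrow> restr S Y a b"
  by (auto simp: restr_def)

lemma rtranclp_restr_mono: "X \<subseteq> Y \<Longrightarrow> (\<And>a b. R a b \<Longrightarrow> S a b) \<Longrightarrow> (restr R X)\<^sup>*\<^sup>* a b \<Longrightarrow> (restr S Y)\<^sup>*\<^sup>* a b"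
proof -
  assume a: "X \<subseteq> Y" "\<And>a b. R a b \<Longrightarrow> S a b" "(restr R X)\<^sup>*\<^sup>* a b"
  show ?thesis using a(3)
  proof (induction rule: rtranclp_induct)
    case base then show ?case by (rule rtranclp.rtrancl_refl)
  next
    case (step y z)
    have "restr S Y y z" by (rule restr_mono[OF a(1,2) step.hyps(2)])
    then show ?case by (rule rtranclp.rtrancl_into_rtrancl[OF step.IH])
  qed
qed

lemma relpowp_sym: assumes s: "\<And>a b. P a b \<Longrightarrow> P b a" shows "(P ^^ n) x y \<Longrightarrow> (P ^^ n) y x"
proof (induction n arbitrary: x)
  case 0 then show ?case by simp
next
  case (Suc n)
  have "\<exists>z. P x z \<and> (P ^^ n) z y" by (rule relpowp_Suc_D2[OF Suc.prems])
  then obtain z where z: "P x z" "(P ^^ n) z y" by (elim exE conjE)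
  have "(P ^^ n) y z" by (rule Suc.IH[OF z(2)])
  moreover have "P z x" by (rule s[OF z(1)])
  ultimately show ?case by (rule relpowp_Suc_I)
qed

lemma rtranclp_sym: assumes s: "\<And>a b. P a b \<Longrightarrow> P b a" and h: "P\<^sup>*\<^sup>* x y" shows "P\<^sup>*\<^sup>* y x"
proof -
  have "\<exists>n. (P ^^ n) x y" by (rule rtranclp_imp_relpowp[OF h])
  then obtain n where n: "(P ^^ n) x y" by (rule exE)
  have "(P ^^ n) y x" by (rule relpowp_sym[OF s n])
  then show ?thesis by (rule relpowp_imp_rtranclp)
qed



locale cg =
  fixes V :: "'a set" and E :: "'a \<Rightarrow> 'a \<Rightarrow> bool"
  assumes gr: "graph V E" and cn: "connected_graph V E"
begin

abbreviation "rE \<equiv> restr E V"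

lemma E_V: "E x y \<Longrightarrow> x \<in> V \<and> y \<in> V" using gr graph_def by metis
lemma E_sym: "E x y \<Longrightarrow> E y x" using gr graph_def by metis
lemma rE_sym: "rE x y \<Longrightarrow> rE y x" using E_sym by (auto simp: restr_def)

lemma walk_relpow_iff:
  assumes "x \<in> V"
  shows "(\<exists>p. walk V E p \<and> hd p = x \<and> last p = y \<and> length p = n + 1) \<longleftrightarrow> (rE ^^ n) x y"
proof
  assume "\<exists>p. walk V E p \<and> hd p = x \<and> last p = y \<and> length p = n + 1"
  then obtain p where "lchain E V p" "hd p = x" "last p = y" "length p = n + 1"
    by (auto simp: walk_lchain)
  then show "(rE ^^ n) x y" using lchain_relpow by fastforce
next
  assume "(rE ^^ n) x y"
  then show "\<exists>p. walk V E p \<and> hd p = x \<and> last p = y \<and> length p = n + 1"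
    using relpow_lchain[OF _ assms] by (simp add: walk_lchain)
qed

lemma gdist_eq: "x \<in> V \<Longrightarrow> gdist V E x y = (LEAST n. (rE ^^ n) x y)"
  unfolding gdist_def using walk_relpow_iff by simp

lemma conn: "x \<in> V \<Longrightarrow> y \<in> V \<Longrightarrow> \<exists>n. (rE ^^ n) x y"
proof -
  assume a: "x \<in> V" "y \<in> V"
  then obtain p where "walk V E p" "hd p = x" "last p = y"
    using cn unfolding connected_graph_def by blast
  then show ?thesis using lchain_relpow by (metis walk_lchain)
qed

lemma gd_real: "x \<in> V \<Longrightarrow> y \<in> V \<Longrightarrow> (rE ^^ (gdist V E x y)) x y"
  using gdist_eq conn by (metis LeastI_ex)

lemma gd_le: "(rE ^^ n) x y \<Longrightarrow> x \<in> V \<Longrightarrow> gdist V E x y \<le> n"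
  using gdist_eq by (metis Least_le)

lemma gd_sym: "x \<in> V \<Longrightarrow> y \<in> V \<Longrightarrow> gdist V E x y = gdist V E y x"
proof -
  assume a: "x \<in> V" "y \<in> V"
  have "(rE ^^ gdist V E x y) y x" using relpowp_sym[of rE, OF rE_sym] gd_real[OF a] by blast
  then have 1: "gdist V E y x \<le> gdist V E x y" using gd_le a by blast
  have "(rE ^^ gdist V E y x) x y" using relpowp_sym[of rE, OF rE_sym] gd_real[OF a(2,1)] by blast
  then have 2: "gdist V E x y \<le> gdist V E y x" using gd_le a by blast
  show ?thesis using 1 2 by simp
qed

lemma gd_tri: "x \<in> V \<Longrightarrow> y \<in> V \<Longrightarrow> z \<in> V \<Longrightarrow> gdist V E x z \<le> gdist V E x y + gdist V E y z"
proof -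
  assume a: "x \<in> V" "y \<in> V" "z \<in> V"
  have "(rE ^^ (gdist V E x y + gdist V E y z)) x z"
    using gd_real[of x y] gd_real[of y z] a by (metis relcomppI relpowp_add)
  then show ?thesis using gd_le a by blast
qed

lemma gd_edge: "E x y \<Longrightarrow> gdist V E x y \<le> 1"
proof -
  assume "E x y"
  then have "(rE ^^ 1) x y" unfolding relpowp_1 using E_V by (simp add: restr_def)
  then show ?thesis using gd_le E_V \<open>E x y\<close> by blast
qed

lemma gd_refl: "x \<in> V \<Longrightarrow> gdist V E x x = 0"
  using gd_le[of 0 x x] by simp

lemma gd_two: "x \<in> V \<Longrightarrow> y \<in> V \<Longrightarrow> gdist V E x y \<le> 2 \<Longrightarrow> x = y \<or> E x y \<or> (\<exists>m. E x m \<and> E m y)"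
proof -
  assume a: "x \<in> V" "y \<in> V" "gdist V E x y \<le> 2"
  have r: "(rE ^^ (gdist V E x y)) x y" using gd_real a by blast
  consider "gdist V E x y = 0" | "gdist V E x y = 1" | "gdist V E x y = 2" using a by linarith
  then show ?thesis
  proof cases
    case 1 then show ?thesis using r by simp
  next
    case 2 then show ?thesis using r by (simp add: restr_def eq_OO)
  next
    case 3
    then have "(rE ^^ Suc (Suc 0)) x y" using r by (simp add: numeral_2_eq_2)
    then obtain m where "rE x m" "(rE ^^ Suc 0) m y" using relpowp_Suc_D2 by metis
    then have "E x m" "E m y" by (simp_all add: restr_def eq_OO)
    then show ?thesis by blast
  qed
qed

end

lemma rtranclp_restr_in: "(restr R X)\<^sup>*\<^sup>* x y \<Longrightarrow> x \<in> X \<Longrightarrow> y \<in> X"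
  by (induction rule: rtranclp_induct) (auto simp: restr_def)

locale cgr = cg +
  fixes x0 :: 'a and lam k :: real
  assumes x0V: "x0 \<in> V" and lam: "lam > 0"
begin

abbreviation "lay N \<equiv> layer V E x0 lam N"
abbreviation "K \<equiv> \<lambda>a b. real (gdist V E a b) \<le> k"

lemma layer_V: "lay N \<subseteq> V" by (auto simp: layer_def)

lemma lay_ex: "x \<in> V \<Longrightarrow> \<exists>N. x \<in> lay N"
proof -
  assume x: "x \<in> V"
  define d where "d = real (gdist V E x x0)"
  define N where "N = \<lceil>d / lam\<rceil> - 1"
  have "real_of_int N < d / lam" "d / lam \<le> real_of_int N + 1"
    unfolding N_def by linarith+
  then have "real_of_int N * lam < d" "d \<le> (real_of_int N + 1) * lam"
    using lam by (simp_all add: field_simps)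
  then show ?thesis using x by (auto simp: layer_def d_def)
qed

lemma lay_uniq: "x \<in> lay N \<Longrightarrow> x \<in> lay N' \<Longrightarrow> N = N'"
proof -
  assume "x \<in> lay N" "x \<in> lay N'"
  then have "real_of_int N * lam < (real_of_int N' + 1) * lam" "real_of_int N' * lam < (real_of_int N + 1) * lam"
    by (auto simp: layer_def)
  then have "real_of_int N < real_of_int N' + 1" "real_of_int N' < real_of_int N + 1"
    using lam mult_less_cancel_right_pos by blast+
  then show ?thesis by linarith
qed

lemma kconn_iff: "k_connected V E k S \<longleftrightarrow> (\<forall>x\<in>S. \<forall>y\<in>S. (restr K S)\<^sup>*\<^sup>* x y)"
proof -
  have "k_connected V E k S \<longleftrightarrow> (\<forall>x\<in>S. \<forall>y\<in>S. \<exists>p. lchain K S p \<and> hd p = x \<and> last p = y)"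
    unfolding k_connected_def lchain_def by (simp add: conj_commute conj_left_commute)
  then show ?thesis by (simp add: lchain_iff_rtranclp)
qed

lemma K_sym: "X \<subseteq> V \<Longrightarrow> restr K X a b \<Longrightarrow> restr K X b a"
  unfolding restr_def by (metis gd_sym subsetD)

definition comp :: "'a \<Rightarrow> 'a set" where
  "comp x = {y. \<exists>N. x \<in> lay N \<and> (restr K (lay N))\<^sup>*\<^sup>* x y}"

lemma comp_layer: assumes xN: "x \<in> lay N" shows "comp x = {y. (restr K (lay N))\<^sup>*\<^sup>* x y}"
proof (rule set_eqI)
  fix y
  show "y \<in> comp x \<longleftrightarrow> y \<in> {y. (restr K (lay N))\<^sup>*\<^sup>* x y}"
    unfolding comp_def mem_Collect_eq
  proof
    assume "\<exists>N'. x \<in> lay N' \<and> (restr K (lay N'))\<^sup>*\<^sup>* x y"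
    then obtain N' where N': "x \<in> lay N'" "(restr K (lay N'))\<^sup>*\<^sup>* x y" by (elim exE conjE)
    have "N' = N" by (rule lay_uniq[OF N'(1) xN])
    then show "(restr K (lay N))\<^sup>*\<^sup>* x y" using N'(2) by simp
  next
    assume "(restr K (lay N))\<^sup>*\<^sup>* x y"
    then show "\<exists>N'. x \<in> lay N' \<and> (restr K (lay N'))\<^sup>*\<^sup>* x y" using xN by (intro exI[of _ N] conjI)
  qed
qed

lemma comp_props:
  assumes xN: "x \<in> lay N"
  shows "x \<in> comp x" "comp x \<subseteq> lay N" "k_connected V E k (comp x)"
    "\<And>T N'. comp x \<subseteq> T \<Longrightarrow> T \<subseteq> lay N' \<Longrightarrow> k_connected V E k T \<Longrightarrow> T = comp x"
proof -
  let ?R = "restr K (lay N)"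
  let ?C = "{y. ?R\<^sup>*\<^sup>* x y}"
  have C: "comp x = ?C" by (rule comp_layer[OF xN])
  show "x \<in> comp x" unfolding C by simp
  have sub: "?C \<subseteq> lay N"
  proof
    fix y assume "y \<in> ?C"
    then have "?R\<^sup>*\<^sup>* x y" by simp
    then show "y \<in> lay N" by (rule rtranclp_restr_in[OF _ xN])
  qed
  then show "comp x \<subseteq> lay N" unfolding C .
  have inC: "(restr K ?C)\<^sup>*\<^sup>* x y" if "?R\<^sup>*\<^sup>* x y" for y
    using that
  proof (induction rule: rtranclp_induct)
    case base then show ?case by (rule rtranclp.rtrancl_refl)
  next
    case (step y z)
    have z: "?R\<^sup>*\<^sup>* x z" using step.hyps by (rule rtranclp.rtrancl_into_rtrancl)
    have "K y z" using step.hyps(2) by (simp add: restr_def)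
    moreover have "y \<in> ?C" using step.hyps(1) by simp
    moreover have "z \<in> ?C" using z by simp
    ultimately have "restr K ?C y z" unfolding restr_def by (intro conjI)
    then show ?case by (rule rtranclp.rtrancl_into_rtrancl[OF step.IH])
  qed
  have CV: "?C \<subseteq> V" using sub layer_V by (rule order_trans)
  show "k_connected V E k (comp x)"
    unfolding kconn_iff C
  proof (intro ballI)
    fix y z assume yz: "y \<in> ?C" "z \<in> ?C"
    have 1: "(restr K ?C)\<^sup>*\<^sup>* x y" using yz(1) inC by simp
    have 2: "(restr K ?C)\<^sup>*\<^sup>* x z" using yz(2) inC by simp
    have 3: "(restr K ?C)\<^sup>*\<^sup>* y x"
      by (rule rtranclp_sym[of "restr K ?C", OF K_sym[OF CV] 1])
    show "(restr K ?C)\<^sup>*\<^sup>* y z" by (rule rtranclp_trans[OF 3 2])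
  qed
  fix T N' assume T: "comp x \<subseteq> T" "T \<subseteq> lay N'" "k_connected V E k T"
  have xT: "x \<in> T" using T(1) \<open>x \<in> comp x\<close> by (rule subsetD)
  have "N' = N" by (rule lay_uniq[OF subsetD[OF T(2) xT] xN])
  have "T \<subseteq> ?C"
  proof
    fix t assume "t \<in> T"
    then have h: "(restr K T)\<^sup>*\<^sup>* x t" using T(3) xT unfolding kconn_iff by simp
    have "?R\<^sup>*\<^sup>* x t" by (rule rtranclp_restr_mono[OF T(2)[unfolded \<open>N' = N\<close>] _ h]) simp
    then show "t \<in> ?C" by simp
  qed
  then show "T = comp x" using T(1) unfolding C by (rule antisym)
qed

lemma comp_block: assumes x: "x \<in> V" shows "is_block V E x0 lam k (comp x)"
proof -
  obtain N where N: "x \<in> lay N" using lay_ex[OF x] by (elim exE)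
  have ne: "comp x \<noteq> {}" using comp_props(1)[OF N] by (intro notI) simp
  show ?thesis unfolding is_block_def
    apply (rule exI[of _ N])
    apply (intro conjI allI impI)
    apply (rule ne)
    apply (rule comp_props(2)[OF N])
    apply (rule comp_props(3)[OF N])
    apply (elim conjE)
    apply (erule (2) comp_props(4)[OF N])
    done
qed

lemma comp_self: assumes x: "x \<in> V" shows "x \<in> comp x"
proof -
  obtain N where N: "x \<in> lay N" using lay_ex[OF x] by (elim exE)
  show ?thesis by (rule comp_props(1)[OF N])
qed

lemma block_eq: assumes S: "is_block V E x0 lam k S" "x \<in> S" shows "S = comp x"
proof -
  obtain N where N: "S \<subseteq> lay N" "k_connected V E k S"
    "\<And>T. S \<subseteq> T \<Longrightarrow> T \<subseteq> lay N \<Longrightarrow> k_connected V E k T \<Longrightarrow> T = S"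
    using S(1) unfolding is_block_def by (elim exE conjE) (simp only: imp_conjL[symmetric])
  have xN: "x \<in> lay N" using N(1) S(2) by (rule subsetD)
  have "S \<subseteq> comp x"
  proof
    fix t assume "t \<in> S"
    then have h: "(restr K S)\<^sup>*\<^sup>* x t" using N(2) S(2) unfolding kconn_iff by simp
    have "(restr K (lay N))\<^sup>*\<^sup>* x t" by (rule rtranclp_restr_mono[OF N(1) _ h]) simp
    then show "t \<in> comp x" unfolding comp_layer[OF xN] by simp
  qed
  then have "comp x = S" by (rule N(3)[OF _ comp_props(2)[OF xN] comp_props(3)[OF xN]])
  then show ?thesis by simp
qed

lemma comp_same: assumes a: "x \<in> lay N" "y \<in> lay N" "real (gdist V E x y) \<le> k" shows "comp y = comp x"
proof -
  have "restr K (lay N) x y" using a unfolding restr_def by simp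
  then have "y \<in> comp x" unfolding comp_layer[OF a(1)] by simp
  have xV: "x \<in> V" by (rule subsetD[OF layer_V a(1)])
  have "comp x = comp y" by (rule block_eq[OF comp_block[OF xV] \<open>y \<in> comp x\<close>])
  then show ?thesis by simp
qed

lemma skelV_eq: "skel_V V E x0 lam k = comp ` V"
proof
  show "skel_V V E x0 lam k \<subseteq> comp ` V"
  proof
    fix S assume "S \<in> skel_V V E x0 lam k"
    then have S: "is_block V E x0 lam k S" by (simp add: skel_V_def)
    then obtain N where SN: "S \<noteq> {}" "S \<subseteq> lay N" unfolding is_block_def by (elim exE conjE) simp
    then obtain x where x: "x \<in> S" by blast
    have "x \<in> V" using x SN(2) layer_V by (meson subsetD)
    moreover have "S = comp x" by (rule block_eq[OF S x])
    ultimately show "S \<in> comp ` V" by (rule rev_image_eqI)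
  qed
  show "comp ` V \<subseteq> skel_V V E x0 lam k"
  proof
    fix S assume "S \<in> comp ` V"
    then obtain x where "x \<in> V" "S = comp x" by (elim imageE) simp
    then show "S \<in> skel_V V E x0 lam k" using comp_block by (simp add: skel_V_def)
  qed
qed

lemma comp_V: assumes x: "x \<in> V" shows "comp x \<subseteq> V"
proof -
  obtain N where N: "x \<in> lay N" using lay_ex[OF x] by (elim exE)
  show ?thesis using comp_props(2)[OF N] layer_V by (rule order_trans)
qed

end


lemma gdist_le_gen: assumes a: "((restr E V) ^^ n) x y" "x \<in> V" shows "gdist V E x y \<le> n"
proof -
  obtain p where p: "lchain E V p \<and> hd p = x \<and> last p = y \<and> length p = Suc n"
    using relpow_lchain[OF a] by (rule exE)
  have "walk V E p \<and> hd p = x \<and> last p = y \<and> length p = n + 1"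
    using p by (simp add: walk_lchain)
  then have "\<exists>p. walk V E p \<and> hd p = x \<and> last p = y \<and> length p = n + 1" by (rule exI)
  then show ?thesis unfolding gdist_def by (rule Least_le)
qed

definition N1 :: "('a \<Rightarrow> 'a \<Rightarrow> bool) \<Rightarrow> 'a set \<Rightarrow> 'a set" where
  "N1 E Y = {x. \<exists>y\<in>Y. x = y \<or> E y x}"

lemma N1_mono: "Y \<subseteq> Z \<Longrightarrow> N1 E Y \<subseteq> N1 E Z"
  unfolding N1_def by blast

lemma N1_self: "Y \<subseteq> N1 E Y"
  unfolding N1_def by blast

lemma N1_E: "y \<in> Y \<Longrightarrow> E y x \<Longrightarrow> x \<in> N1 E Y"
  unfolding N1_def by blast

lemma r_disjoint_mono: "r_disjoint V E r X Y \<Longrightarrow> X' \<subseteq> X \<Longrightarrow> Y' \<subseteq> Y \<Longrightarrow> r_disjoint V E r X' Y'"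
  unfolding r_disjoint_def by blast

lemma lay_arith0: "(N*2 < (d::int) \<and> d \<le> (N+1)*2) \<longleftrightarrow> N = (d + 1) div 2 - 1"
  by presburger

lemma lay_arith: "(d1::int) \<le> d0 + 1 \<Longrightarrow> d0 \<le> d1 + 1 \<Longrightarrow> d2 \<le> d1 + 1 \<Longrightarrow> d1 \<le> d2 + 1 \<Longrightarrow>
   (d0 + 1) div 2 - 1 \<noteq> (d1 + 1) div 2 - 1 \<Longrightarrow> (d1 + 1) div 2 - 1 \<noteq> (d2 + 1) div 2 - 1 \<Longrightarrow>
   (d0 + 1) div 2 - 1 = (d2 + 1) div 2 - 1"
  by presburger

context cgr
begin

abbreviation "V2 \<equiv> skel_V V E x0 lam k"
abbreviation "E2 \<equiv> skel_E V E x0 lam k"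
abbreviation "r2 \<equiv> restr E2 V2"

lemma comp_V2: "x \<in> V \<Longrightarrow> comp x \<in> V2"
  unfolding skelV_eq by (rule imageI)

lemma V2_block: "A \<in> V2 \<Longrightarrow> is_block V E x0 lam k A"
  by (simp add: skel_V_def)

lemma V2_comp: "A \<in> V2 \<Longrightarrow> a \<in> A \<Longrightarrow> A = comp a"
  by (rule block_eq[OF V2_block])

lemma V2_sub: assumes A: "A \<in> V2" shows "A \<subseteq> V"
proof -
  obtain x where "x \<in> V" "A = comp x" using A unfolding skelV_eq by (elim imageE)
  then show ?thesis using comp_V by simp
qed

lemma V2_ne: assumes A: "A \<in> V2" shows "A \<noteq> {}"
proof -
  obtain x where "x \<in> V" "A = comp x" using A unfolding skelV_eq by (elim imageE)
  then show ?thesis using comp_self by auto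
qed

lemma edge_comp: assumes e: "E a b" shows "\<exists>m\<le>1. (r2 ^^ m) (comp a) (comp b)"
proof -
  have ab: "a \<in> V" "b \<in> V" using E_V[OF e] by simp_all
  show ?thesis
  proof (cases "comp a = comp b")
    case True then show ?thesis by (intro exI[of _ 0]) simp
  next
    case False
    have "a \<in> comp a" "b \<in> comp b" using comp_self ab by simp_all
    then have "E2 (comp a) (comp b)" unfolding skel_E_def
      using False comp_V2[OF ab(1)] comp_V2[OF ab(2)] e by (intro conjI bexI)
    then have "(r2 ^^ 1) (comp a) (comp b)" unfolding relpowp_1 restr_def
      using comp_V2[OF ab(1)] comp_V2[OF ab(2)] by (intro conjI)
    then show ?thesis by (intro exI[of _ 1]) simp
  qed
qed

lemma r2_add: assumes "(r2 ^^ m) A B" "(r2 ^^ n) B C" shows "(r2 ^^ (m + n)) A C"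
  unfolding relpowp_add using assms by (rule relcomppI)

lemma lay2: assumes l: "lam = 2" and x: "x \<in> V"
  shows "x \<in> lay N \<longleftrightarrow> N = (int (gdist V E x x0) + 1) div 2 - 1"
proof -
  define d where "d = gdist V E x x0"
  have e1: "(real_of_int N * 2 < real d) = (N*2 < int d)"
  proof -
    have "real_of_int N * 2 = real_of_int (N * 2)" by simp
    moreover have "real d = real_of_int (int d)" by simp
    ultimately show ?thesis by (simp only: of_int_less_iff)
  qed
  have e2: "(real d \<le> (real_of_int N + 1) * 2) = (int d \<le> (N+1)*2)"
  proof -
    have "(real_of_int N + 1) * 2 = real_of_int ((N + 1) * 2)" by simp
    moreover have "real d = real_of_int (int d)" by simp
    ultimately show ?thesis by (simp only: of_int_le_iff)
  qed
  have "x \<in> lay N \<longleftrightarrow> (real_of_int N * 2 < real d \<and> real d \<le> (real_of_int N + 1) * 2)"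
    unfolding layer_def d_def using x l by simp
  also have "\<dots> \<longleftrightarrow> (N*2 < int d \<and> int d \<le> (N+1)*2)"
    by (simp only: e1 e2)
  also have "\<dots> \<longleftrightarrow> N = (int d + 1) div 2 - 1" by (rule lay_arith0)
  finally show ?thesis by (simp add: d_def)
qed

lemma three:
  assumes l: "lam = 2" "k = 2" and e: "E a0 a1" "E a1 a2"
  shows "comp a0 = comp a2 \<or> comp a0 = comp a1 \<or> comp a1 = comp a2"
proof -
  have V: "a0 \<in> V" "a1 \<in> V" "a2 \<in> V" using E_V[OF e(1)] E_V[OF e(2)] by simp_all
  define d0 where "d0 = gdist V E a0 x0"
  define d1 where "d1 = gdist V E a1 x0"
  define d2 where "d2 = gdist V E a2 x0"
  have g01: "gdist V E a0 a1 \<le> 1" "gdist V E a1 a0 \<le> 1"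
    using gd_edge[OF e(1)] gd_edge[OF E_sym[OF e(1)]] by simp_all
  have g12: "gdist V E a1 a2 \<le> 1" "gdist V E a2 a1 \<le> 1"
    using gd_edge[OF e(2)] gd_edge[OF E_sym[OF e(2)]] by simp_all
  have "d1 \<le> d0 + 1" "d0 \<le> d1 + 1" "d2 \<le> d1 + 1" "d1 \<le> d2 + 1"
    unfolding d0_def d1_def d2_def
    using gd_tri[OF V(2) V(1) x0V] gd_tri[OF V(1) V(2) x0V] gd_tri[OF V(3) V(2) x0V] gd_tri[OF V(2) V(3) x0V] g01 g12
    by linarith+
  then have d: "int d1 \<le> int d0 + 1" "int d0 \<le> int d1 + 1" "int d2 \<le> int d1 + 1" "int d1 \<le> int d2 + 1"
    by linarith+
  define L0 where "L0 = (int d0 + 1) div 2 - 1"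
  define L1 where "L1 = (int d1 + 1) div 2 - 1"
  define L2 where "L2 = (int d2 + 1) div 2 - 1"
  have in0: "a0 \<in> lay L0" unfolding lay2[OF l(1) V(1)] L0_def d0_def by (rule refl)
  have in1: "a1 \<in> lay L1" unfolding lay2[OF l(1) V(2)] L1_def d1_def by (rule refl)
  have in2: "a2 \<in> lay L2" unfolding lay2[OF l(1) V(3)] L2_def d2_def by (rule refl)
  show ?thesis
  proof (cases "L0 = L1")
    case True
    have "real (gdist V E a0 a1) \<le> k" using g01 l by simp
    then have "comp a1 = comp a0" using comp_same[of a0 L0 a1] in0 in1 True by simp
    then show ?thesis by simp
  next
    case F1: False
    show ?thesis
    proof (cases "L1 = L2")
      case True
      have "real (gdist V E a1 a2) \<le> k" using g12 l by simp
      then have "comp a2 = comp a1" using comp_same[of a1 L1 a2] in1 in2 True by simp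
      then show ?thesis by simp
    next
      case False
      have "L0 = L2" using lay_arith[OF d F1[unfolded L0_def L1_def] False[unfolded L1_def L2_def]]
        unfolding L0_def L2_def .
      have "gdist V E a0 a2 \<le> 2" using gd_tri[OF V(1) V(2) V(3)] g01 g12 by linarith
      then have "real (gdist V E a0 a2) \<le> k" using l by simp
      then have "comp a2 = comp a0" using comp_same[of a0 L0 a2] in0 in2 \<open>L0 = L2\<close> by simp
      then show ?thesis by simp
    qed
  qed
qed

lemma halving:
  assumes l: "lam = 2" "k = 2"
  shows "(rE ^^ L) a b \<Longrightarrow> a \<in> V \<Longrightarrow> \<exists>n. 2 * n \<le> L + 1 \<and> (r2 ^^ n) (comp a) (comp b)"
proof (induction L arbitrary: a rule: less_induct)
  case (less L)
  show ?case
  proof (cases L)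
    case 0 then show ?thesis using less.prems by (intro exI[of _ 0]) simp
  next
    case (Suc L1)
    show ?thesis
    proof (cases L1)
      case 0
      then have "rE a b" using less.prems Suc by (simp add: eq_OO)
      then have "E a b" by (simp add: restr_def)
      have "\<exists>m\<le>1. (r2 ^^ m) (comp a) (comp b)" by (rule edge_comp[OF \<open>E a b\<close>])
      then obtain m where m: "m \<le> 1 \<and> (r2 ^^ m) (comp a) (comp b)" by (rule exE)
      have "2 * m \<le> L + 1" using m Suc 0 by simp
      then show ?thesis using m by (intro exI[of _ m]) simp
    next
      case (Suc L')
      then have "(rE ^^ Suc (Suc L')) a b" using less.prems \<open>L = Suc L1\<close> by simp
      then have "\<exists>a1. rE a a1 \<and> (rE ^^ Suc L') a1 b" by (rule relpowp_Suc_D2)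
      then obtain a1 where a1: "rE a a1" "(rE ^^ Suc L') a1 b" by (elim exE conjE)
      then have "\<exists>a2. rE a1 a2 \<and> (rE ^^ L') a2 b" by (intro relpowp_Suc_D2)
      then obtain a2 where a2: "rE a1 a2" "(rE ^^ L') a2 b" by (elim exE conjE)
      have e: "E a a1" "E a1 a2" "a2 \<in> V" using a1(1) a2(1) by (simp_all add: restr_def)
      have "L' < L" using Suc \<open>L = Suc L1\<close> by simp
      have "\<exists>n. 2 * n \<le> L' + 1 \<and> (r2 ^^ n) (comp a2) (comp b)"
        by (rule less.IH[OF \<open>L' < L\<close> a2(2) e(3)])
      then obtain n' where n': "2 * n' \<le> L' + 1" "(r2 ^^ n') (comp a2) (comp b)" by (elim exE conjE)
      have "\<exists>m\<le>1. (r2 ^^ m) (comp a) (comp a2)"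
      proof -
        consider "comp a = comp a2" | "comp a = comp a1" | "comp a1 = comp a2"
          using three[OF l e(1,2)] by (elim disjE) simp_all
        then show ?thesis
        proof cases
          case 1 then show ?thesis by (intro exI[of _ 0]) simp
        next
          case 2 then show ?thesis using edge_comp[OF e(2)] by simp
        next
          case 3 then show ?thesis using edge_comp[OF e(1)] by simp
        qed
      qed
      then obtain m where m: "m \<le> 1" "(r2 ^^ m) (comp a) (comp a2)" by (elim exE conjE)
      have "(r2 ^^ (m + n')) (comp a) (comp b)" by (rule r2_add[OF m(2) n'(2)])
      moreover have "2 * (m + n') \<le> L + 1" using m n' Suc \<open>L = Suc L1\<close> by simp
      ultimately show ?thesis by (intro exI[of _ "m + n'"] conjI)
    qed
  qed
qed

lemma gd2:
  assumes l: "lam = 2" "k = 2" and ab: "a \<in> V" "b \<in> V"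
  shows "2 * gdist V2 E2 (comp a) (comp b) \<le> gdist V E a b + 1"
proof -
  have "\<exists>n. 2 * n \<le> gdist V E a b + 1 \<and> (r2 ^^ n) (comp a) (comp b)"
    by (rule halving[OF l gd_real[OF ab] ab(1)])
  then obtain n where n: "2 * n \<le> gdist V E a b + 1" "(r2 ^^ n) (comp a) (comp b)" by (elim exE conjE)
  have "gdist V2 E2 (comp a) (comp b) \<le> n" by (rule gdist_le_gen[OF n(2) comp_V2[OF ab(1)]])
  then show ?thesis using n(1) by linarith
qed

lemma inblock:
  assumes k2: "k = 2" and A: "A \<in> V2" "A \<subseteq> Y" and ab: "a \<in> A" "b \<in> A"
  shows "(restr E (N1 E Y))\<^sup>*\<^sup>* a b"
proof -
  have "k_connected V E k A" using V2_block[OF A(1)] unfolding is_block_def by (elim exE conjE)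
  then have "(restr K A)\<^sup>*\<^sup>* a b" using ab unfolding kconn_iff by simp
  then show ?thesis
  proof (induction rule: rtranclp_induct)
    case base then show ?case by (rule rtranclp.rtrancl_refl)
  next
    case (step y z)
    then have yz: "y \<in> A" "z \<in> A" "gdist V E y z \<le> 2" using k2 by (simp_all add: restr_def)
    have yzV: "y \<in> V" "z \<in> V" using yz(1,2) V2_sub[OF A(1)] by (simp_all add: subsetD)
    have yzN: "y \<in> N1 E Y" "z \<in> N1 E Y" using yz(1,2) A(2) N1_self[of Y E] by blast+
    have "(restr E (N1 E Y))\<^sup>*\<^sup>* y z"
      using gd_two[OF yzV yz(3)]
    proof (elim disjE exE conjE)
      assume "y = z" then show ?thesis by simp
    next
      assume "E y z"
      then have "restr E (N1 E Y) y z" using yzN by (simp add: restr_def)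
      then show ?thesis by (rule r_into_rtranclp)
    next
      fix m assume m: "E y m" "E m z"
      have "y \<in> Y" using yz(1) A(2) by (simp add: subsetD)
      then have "m \<in> N1 E Y" using m(1) by (rule N1_E)
      then have 1: "restr E (N1 E Y) y m" and 2: "restr E (N1 E Y) m z" using m yzN by (simp_all add: restr_def)
      show ?thesis by (rule converse_rtranclp_into_rtranclp[OF 1 r_into_rtranclp[of "restr E (N1 E Y)", OF 2]])
    qed
    then show ?case by (rule rtranclp_trans[OF step.IH])
  qed
qed

lemma lift:
  assumes k2: "k = 2" and Z: "Z \<subseteq> V2"
  shows "(restr E2 Z)\<^sup>*\<^sup>* A B \<Longrightarrow> A \<in> Z \<Longrightarrow> a \<in> A \<Longrightarrow> \<forall>b\<in>B. (restr E (N1 E (\<Union>Z)))\<^sup>*\<^sup>* a b"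
proof (induction rule: rtranclp_induct)
  case base
  have "A \<in> V2" using base(1) Z by (simp add: subsetD)
  moreover have "A \<subseteq> \<Union>Z" using base(1) by (rule Union_upper)
  ultimately show ?case using inblock[OF k2] base(2) by simp
next
  case (step B C)
  then have BC: "B \<in> Z" "C \<in> Z" "E2 B C" by (simp_all add: restr_def)
  then obtain x y where xy: "x \<in> B" "y \<in> C" "E x y" unfolding skel_E_def by blast
  have 1: "(restr E (N1 E (\<Union>Z)))\<^sup>*\<^sup>* a x" using step.IH step.prems xy(1) by simp
  have "x \<in> \<Union>Z" "y \<in> \<Union>Z" using xy BC by blast+
  then have 2: "restr E (N1 E (\<Union>Z)) x y" using xy(3) N1_self[of "\<Union>Z" E] unfolding restr_def by blast
  have CV: "C \<in> V2" using BC(2) Z by (simp add: subsetD)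
  have CZ: "C \<subseteq> \<Union>Z" using BC(2) by (rule Union_upper)
  show ?case
  proof
    fix c assume "c \<in> C"
    have 3: "(restr E (N1 E (\<Union>Z)))\<^sup>*\<^sup>* y c" by (rule inblock[OF k2 CV CZ xy(2) \<open>c \<in> C\<close>])
    show "(restr E (N1 E (\<Union>Z)))\<^sup>*\<^sup>* a c"
      by (rule rtranclp_trans[OF rtranclp.rtrancl_into_rtrancl[OF 1 2] 3])
  qed
qed

lemma N1_V: assumes Z: "Z \<subseteq> V2" shows "N1 E (\<Union>Z) \<subseteq> V"
proof
  fix x assume "x \<in> N1 E (\<Union>Z)"
  then obtain A a where "A \<in> Z" "a \<in> A" "x = a \<or> E a x" unfolding N1_def by blast
  moreover have "A \<subseteq> V" using \<open>A \<in> Z\<close> Z V2_sub by blast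
  ultimately show "x \<in> V" using E_V by blast
qed

lemma dist_transfer:
  assumes l: "lam = 2" "k = 2" and M: "M \<ge> 4" and Z: "Z1 \<subseteq> V2" "Z2 \<subseteq> V2"
    and d: "r_disjoint V2 E2 M Z1 Z2"
  shows "r_disjoint V E (M + 1) (N1 E (\<Union>Z1)) (N1 E (\<Union>Z2))"
  unfolding r_disjoint_def
proof (intro ballI)
  fix x y assume x: "x \<in> N1 E (\<Union>Z1)" and y: "y \<in> N1 E (\<Union>Z2)"
  obtain a A where aA: "A \<in> Z1" "a \<in> A" "x = a \<or> E a x" using x unfolding N1_def by blast
  obtain b B where bB: "B \<in> Z2" "b \<in> B" "y = b \<or> E b y" using y unfolding N1_def by blast
  have A2: "A \<in> V2" and B2: "B \<in> V2" using aA(1) bB(1) Z by (simp_all add: subsetD)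
  have aV: "a \<in> V" using V2_sub[OF A2] aA(2) by (simp add: subsetD)
  have bV: "b \<in> V" using V2_sub[OF B2] bB(2) by (simp add: subsetD)
  have xV: "x \<in> V" using N1_V[OF Z(1)] x by (simp add: subsetD)
  have yV: "y \<in> V" using N1_V[OF Z(2)] y by (simp add: subsetD)
  have AB: "A = comp a" "B = comp b" using V2_comp[OF A2 aA(2)] V2_comp[OF B2 bB(2)] by simp_all
  have 1: "real (gdist V2 E2 A B) > M" using d aA(1,2) bB(1,2) unfolding r_disjoint_def by blast
  have 2: "2 * gdist V2 E2 A B \<le> gdist V E a b + 1" using gd2[OF l aV bV] AB by simp
  have 3: "gdist V E a x \<le> 1"
    using aA(3) proof
    assume "x = a" then show ?thesis using gd_refl[OF aV] by simp
  next
    assume "E a x" then show ?thesis by (rule gd_edge)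
  qed
  have 4: "gdist V E y b \<le> 1"
    using bB(3) proof
    assume "y = b" then show ?thesis using gd_refl[OF bV] by simp
  next
    assume "E b y" then show ?thesis by (rule gd_edge[OF E_sym])
  qed
  have 5: "gdist V E a b \<le> gdist V E a x + gdist V E x y + gdist V E y b"
    using gd_tri[OF aV xV bV] gd_tri[OF xV yV bV] by linarith
  have "real (gdist V E x y) > 2 * M - 3" using 1 2 3 4 5 by linarith
  then show "real (gdist V E x y) > M + 1" using M by linarith
qed

end


context cgr
begin

lemma conn_lift:
  assumes k2: "k = 2" and Z: "Z \<subseteq> V2" and cZ: "connected_graph Z E2"
  shows "connected_graph (N1 E (\<Union>Z)) E"
proof -
  let ?N = "N1 E (\<Union>Z)"
  have "Z \<noteq> {}" using cZ unfolding connected_graph_def by (elim conjE)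
  then obtain A where A: "A \<in> Z" by blast
  have "A \<noteq> {}" using V2_ne A Z by blast
  then obtain a where "a \<in> A" by blast
  then have "a \<in> ?N" using A N1_self[of "\<Union>Z" E] by blast
  then have ne: "?N \<noteq> {}" by blast
  have near: "\<exists>A a. A \<in> Z \<and> a \<in> A \<and> (restr E ?N)\<^sup>*\<^sup>* x a \<and> (restr E ?N)\<^sup>*\<^sup>* a x" if x: "x \<in> ?N" for x
  proof -
    obtain a A where aA: "A \<in> Z" "a \<in> A" "x = a \<or> E a x" using x unfolding N1_def by blast
    have aN: "a \<in> ?N" using aA(1,2) N1_self[of "\<Union>Z" E] by blast
    have "(restr E ?N)\<^sup>*\<^sup>* x a \<and> (restr E ?N)\<^sup>*\<^sup>* a x"
      using aA(3)
    proof
      assume "x = a" then show ?thesis by simp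
    next
      assume "E a x"
      then have 1: "restr E ?N a x" and 2: "restr E ?N x a" using aN x E_sym unfolding restr_def by blast+
      show ?thesis using r_into_rtranclp[of "restr E ?N", OF 1] r_into_rtranclp[of "restr E ?N", OF 2] by (intro conjI)
    qed
    then show ?thesis using aA(1,2) by blast
  qed
  show ?thesis unfolding connected_graph_def
  proof (intro conjI ballI ne)
    fix x y assume x: "x \<in> ?N" and y: "y \<in> ?N"
    obtain A a where aA: "A \<in> Z" "a \<in> A" "(restr E ?N)\<^sup>*\<^sup>* x a" using near[OF x] by blast
    obtain B b where bB: "B \<in> Z" "b \<in> B" "(restr E ?N)\<^sup>*\<^sup>* b y" using near[OF y] by blast
    have "\<exists>p. walk Z E2 p \<and> hd p = A \<and> last p = B" using cZ aA(1) bB(1) unfolding connected_graph_def by blast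
    then have "\<exists>p. lchain E2 Z p \<and> hd p = A \<and> last p = B" by (simp add: walk_lchain)
    then have "(restr E2 Z)\<^sup>*\<^sup>* A B" using lchain_iff_rtranclp[OF aA(1)] by simp
    then have "\<forall>b\<in>B. (restr E ?N)\<^sup>*\<^sup>* a b" by (rule lift[OF k2 Z _ aA(1) aA(2)])
    then have ab: "(restr E ?N)\<^sup>*\<^sup>* a b" using bB(2) by simp
    have "(restr E ?N)\<^sup>*\<^sup>* x y" by (rule rtranclp_trans[OF rtranclp_trans[OF aA(3) ab] bB(3)])
    then have "\<exists>p. lchain E ?N p \<and> hd p = x \<and> last p = y" using lchain_iff_rtranclp[OF x] by simp
    then show "\<exists>p. walk ?N E p \<and> hd p = x \<and> last p = y" by (simp add: walk_lchain)
  qed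
qed

lemma path_lift:
  assumes k2: "k = 2" and W: "walk V2 E2 W" and u: "hd W \<in> Bu" and v: "last W \<in> Bv"
  shows "\<exists>p. walk V E p \<and> distinct p \<and> hd p \<in> N1 E (\<Union>Bu) \<and> last p \<in> N1 E (\<Union>Bv)
           \<and> set p \<subseteq> N1 E (\<Union>(set W))"
proof -
  have lW: "lchain E2 V2 W" using W by (simp add: walk_lchain)
  have Wne: "W \<noteq> []" using lW by (simp add: lchain_def)
  have WV: "set W \<subseteq> V2" using lW by (rule lchain_set)
  have hW: "hd W \<in> set W" using Wne by simp
  have lastW: "last W \<in> set W" using Wne by simp
  have "hd W \<noteq> {}" using V2_ne WV hW by blast
  then obtain a where a: "a \<in> hd W" by blast
  have "last W \<noteq> {}" using V2_ne WV lastW by blast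
  then obtain b where b: "b \<in> last W" by blast
  have "lchain E2 (set W) W" using lW by (rule lchain_mono) simp
  then have "\<exists>p. lchain E2 (set W) p \<and> hd p = hd W \<and> last p = last W" by blast
  then have "(restr E2 (set W))\<^sup>*\<^sup>* (hd W) (last W)" using lchain_iff_rtranclp[OF hW] by simp
  then have "\<forall>b\<in>last W. (restr E (N1 E (\<Union>(set W))))\<^sup>*\<^sup>* a b" by (rule lift[OF k2 WV _ hW a])
  then have ab: "(restr E (N1 E (\<Union>(set W))))\<^sup>*\<^sup>* a b" using b by simp
  have aN: "a \<in> N1 E (\<Union>(set W))" using a hW N1_self[of "\<Union>(set W)" E] by blast
  have "\<exists>p. lchain E (N1 E (\<Union>(set W))) p \<and> hd p = a \<and> last p = b"
    using ab lchain_iff_rtranclp[OF aN] by simp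
  then obtain p where p: "lchain E (N1 E (\<Union>(set W))) p" "hd p = a" "last p = b" by blast
  have "\<exists>q. lchain E (N1 E (\<Union>(set W))) q \<and> distinct q \<and> hd q = hd p \<and> last q = last p \<and> set q \<subseteq> set p"
    by (rule lchain_distinct[OF p(1)])
  then obtain q where q: "lchain E (N1 E (\<Union>(set W))) q" "distinct q" "hd q = a" "last q = b"
    using p by auto
  have qN: "set q \<subseteq> N1 E (\<Union>(set W))" using q(1) by (rule lchain_set)
  have "walk V E q" unfolding walk_lchain using q(1) qN N1_V[OF WV] by (meson lchain_mono order_trans)
  moreover have "hd q \<in> N1 E (\<Union>Bu)" using q(3) a u N1_self[of "\<Union>Bu" E] by blast
  moreover have "last q \<in> N1 E (\<Union>Bv)" using q(4) b v N1_self[of "\<Union>Bv" E] by blast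
  ultimately show ?thesis using q(2) qN by blast
qed

lemma transfer:
  assumes l: "lam = 2" "k = 2" and M: "M \<ge> 4" and fm: "fat_minor V2 E2 M VH EH"
  shows "fat_minor V E (M + 1) VH EH"
proof -
  have "\<exists>B' P'. (\<forall>v\<in>VH. B' v \<subseteq> V2 \<and> connected_graph (B' v) E2) \<and>
     (\<forall>e\<in>EH. walk V2 E2 (P' e) \<and> distinct (P' e) \<and>
        (\<exists>u v. e = {u, v} \<and> hd (P' e) \<in> B' u \<and> last (P' e) \<in> B' v)) \<and>
     (\<forall>u\<in>VH. \<forall>v\<in>VH. u \<noteq> v \<longrightarrow> r_disjoint V2 E2 M (B' u) (B' v)) \<and>
     (\<forall>e\<in>EH. \<forall>e'\<in>EH. e \<noteq> e' \<longrightarrow> r_disjoint V2 E2 M (set (P' e)) (set (P' e'))) \<and>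
     (\<forall>v\<in>VH. \<forall>e\<in>EH. v \<notin> e \<longrightarrow> r_disjoint V2 E2 M (B' v) (set (P' e)))"
    using fm unfolding fat_minor_def .
  then obtain B' P' where
    hB: "\<forall>v\<in>VH. B' v \<subseteq> V2 \<and> connected_graph (B' v) E2" and
    hP: "\<forall>e\<in>EH. walk V2 E2 (P' e) \<and> distinct (P' e) \<and>
        (\<exists>u v. e = {u, v} \<and> hd (P' e) \<in> B' u \<and> last (P' e) \<in> B' v)" and
    hBB: "\<forall>u\<in>VH. \<forall>v\<in>VH. u \<noteq> v \<longrightarrow> r_disjoint V2 E2 M (B' u) (B' v)" and
    hPP: "\<forall>e\<in>EH. \<forall>e'\<in>EH. e \<noteq> e' \<longrightarrow> r_disjoint V2 E2 M (set (P' e)) (set (P' e'))" and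
    hBP: "\<forall>v\<in>VH. \<forall>e\<in>EH. v \<notin> e \<longrightarrow> r_disjoint V2 E2 M (B' v) (set (P' e))"
    by (elim exE conjE)
  define B where "B v = N1 E (\<Union>(B' v))" for v
  have PW: "set (P' e) \<subseteq> V2" if "e \<in> EH" for e
    using hP that lchain_set unfolding walk_lchain by blast
  have "\<forall>e\<in>EH. \<exists>p. walk V E p \<and> distinct p \<and> (\<exists>u v. e = {u, v} \<and> hd p \<in> B u \<and> last p \<in> B v)
          \<and> set p \<subseteq> N1 E (\<Union>(set (P' e)))"
  proof
    fix e assume e: "e \<in> EH"
    obtain u v where uv: "e = {u, v}" "hd (P' e) \<in> B' u" "last (P' e) \<in> B' v" using hP e by blast
    have W: "walk V2 E2 (P' e)" using hP e by blast
    obtain p where p: "walk V E p" "distinct p" "hd p \<in> N1 E (\<Union>(B' u))" "last p \<in> N1 E (\<Union>(B' v))"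
        "set p \<subseteq> N1 E (\<Union>(set (P' e)))"
      using path_lift[OF l(2) W uv(2) uv(3)] by blast
    show "\<exists>p. walk V E p \<and> distinct p \<and> (\<exists>u v. e = {u, v} \<and> hd p \<in> B u \<and> last p \<in> B v)
          \<and> set p \<subseteq> N1 E (\<Union>(set (P' e)))"
      using p uv(1) unfolding B_def by blast
  qed
  then obtain P where hP2: "\<forall>e\<in>EH. walk V E (P e) \<and> distinct (P e) \<and> (\<exists>u v. e = {u, v} \<and> hd (P e) \<in> B u \<and> last (P e) \<in> B v)
          \<and> set (P e) \<subseteq> N1 E (\<Union>(set (P' e)))"
    by (rule bchoice[THEN exE])
  show ?thesis unfolding fat_minor_def
  proof (intro exI[of _ B] exI[of _ P] conjI ballI impI)
    fix v assume v: "v \<in> VH"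
    have "B' v \<subseteq> V2" using hB v by blast
    then show "B v \<subseteq> V" unfolding B_def by (rule N1_V)
    show "connected_graph (B v) E" unfolding B_def using conn_lift[OF l(2)] hB v by blast
  next
    fix e assume e: "e \<in> EH"
    show "walk V E (P e)" "distinct (P e)" "\<exists>u v. e = {u, v} \<and> hd (P e) \<in> B u \<and> last (P e) \<in> B v"
      using hP2 e by blast+
  next
    fix u v assume uv: "u \<in> VH" "v \<in> VH" "u \<noteq> v"
    have "r_disjoint V2 E2 M (B' u) (B' v)" using hBB uv by blast
    moreover have "B' u \<subseteq> V2" "B' v \<subseteq> V2" using hB uv by blast+
    ultimately show "r_disjoint V E (M + 1) (B u) (B v)" unfolding B_def using dist_transfer[OF l M] by blast
  next
    fix e e' assume ee: "e \<in> EH" "e' \<in> EH" "e \<noteq> e'"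
    have "r_disjoint V2 E2 M (set (P' e)) (set (P' e'))" using hPP ee by blast
    then have "r_disjoint V E (M + 1) (N1 E (\<Union>(set (P' e)))) (N1 E (\<Union>(set (P' e'))))"
      using dist_transfer[OF l M] PW ee by blast
    moreover have "set (P e) \<subseteq> N1 E (\<Union>(set (P' e)))" "set (P e') \<subseteq> N1 E (\<Union>(set (P' e')))"
      using hP2 ee by blast+
    ultimately show "r_disjoint V E (M + 1) (set (P e)) (set (P e'))" by (rule r_disjoint_mono)
  next
    fix v e assume ve: "v \<in> VH" "e \<in> EH" "v \<notin> e"
    have "r_disjoint V2 E2 M (B' v) (set (P' e))" using hBP ve by blast
    moreover have "B' v \<subseteq> V2" using hB ve by blast
    ultimately have "r_disjoint V E (M + 1) (B v) (N1 E (\<Union>(set (P' e))))"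
      unfolding B_def using dist_transfer[OF l M] PW ve by blast
    moreover have "set (P e) \<subseteq> N1 E (\<Union>(set (P' e)))" using hP2 ve by blast
    ultimately show "r_disjoint V E (M + 1) (B v) (set (P e))" using r_disjoint_mono by blast
  qed
qed

lemma skel_graph: "graph V2 E2"
proof -
  have 1: "\<forall>S T. E2 S T \<longrightarrow> S \<in> V2 \<and> T \<in> V2" unfolding skel_E_def by blast
  have 2: "\<forall>S T. E2 S T \<longrightarrow> E2 T S"
  proof (intro allI impI)
    fix S T assume h: "E2 S T"
    then have "S \<in> V2" "T \<in> V2" "S \<noteq> T" "\<exists>x\<in>S. \<exists>y\<in>T. E x y" unfolding skel_E_def by simp_all
    then show "E2 T S" unfolding skel_E_def using E_sym by blast
  qed
  have 3: "\<forall>S. \<not> E2 S S" unfolding skel_E_def by simp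
  show ?thesis unfolding graph_def using 1 2 3 by (intro conjI)
qed

lemma skel_conn: "connected_graph V2 E2"
  unfolding connected_graph_def
proof (intro conjI ballI)
  show "V2 \<noteq> {}" using comp_V2[OF x0V] by blast
next
  fix S T assume S: "S \<in> V2" and T: "T \<in> V2"
  obtain x where x: "x \<in> V" "S = comp x" using S unfolding skelV_eq by (elim imageE)
  obtain y where y: "y \<in> V" "T = comp y" using T unfolding skelV_eq by (elim imageE)
  obtain n where "(rE ^^ n) x y" using conn[OF x(1) y(1)] by (elim exE)
  then have "rE\<^sup>*\<^sup>* x y" by (rule relpowp_imp_rtranclp)
  then have "r2\<^sup>*\<^sup>* (comp x) (comp y)"
  proof (induction rule: rtranclp_induct)
    case base then show ?case by simp
  next
    case (step z w)
    have "E z w" using step.hyps(2) by (simp add: restr_def)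
    then have "\<exists>m\<le>1. (r2 ^^ m) (comp z) (comp w)" by (rule edge_comp)
    then obtain m where "(r2 ^^ m) (comp z) (comp w)" by blast
    then have "r2\<^sup>*\<^sup>* (comp z) (comp w)" by (rule relpowp_imp_rtranclp)
    then show ?case by (rule rtranclp_trans[OF step.IH])
  qed
  then have "\<exists>p. lchain E2 V2 p \<and> hd p = S \<and> last p = T" using lchain_iff_rtranclp[OF S] x(2) y(2) by simp
  then show "\<exists>p. walk V2 E2 p \<and> hd p = S \<and> last p = T" by (simp add: walk_lchain)
qed

lemma skel_root_eq: "skel_root V E x0 lam k = comp x0"
  unfolding skel_root_def
proof (rule the_equality)
  show "comp x0 \<in> V2 \<and> x0 \<in> comp x0" using comp_V2[OF x0V] comp_self[OF x0V] by (intro conjI)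
next
  fix S assume "S \<in> V2 \<and> x0 \<in> S"
  then show "S = comp x0" using V2_comp by blast
qed

end


theorem corollary10:
  fixes V :: "'a set" and E :: "'a \<Rightarrow> 'a \<Rightarrow> bool" and x0 :: 'a
    and lam k M :: real and VH :: "'b set" and EH :: "'b set set"
  assumes "graph V E" and "connected_graph V E" and "unbounded_graph V E x0" and "x0 \<in> V"
    and "lam \<ge> 1" and "k \<ge> 1" and "M \<ge> 6"
    and "simple_graph_sets VH EH"
    and "fat_minor
           (skel_V (skel_V V E x0 lam k) (skel_E V E x0 lam k) (skel_root V E x0 lam k) 2 2)
           (skel_E (skel_V V E x0 lam k) (skel_E V E x0 lam k) (skel_root V E x0 lam k) 2 2)
           M VH EH"
  shows "fat_minor (skel_V V E x0 lam k) (skel_E V E x0 lam k) (M + 1) VH EH"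
proof -
  interpret G: cgr V E x0 lam k
    apply unfold_locales
    using assms(1,2,4,5) by auto
  have rt: "skel_root V E x0 lam k \<in> skel_V V E x0 lam k"
    using G.skel_root_eq G.comp_V2[OF assms(4)] by simp
  interpret H: cgr "skel_V V E x0 lam k" "skel_E V E x0 lam k" "skel_root V E x0 lam k" 2 2
    apply unfold_locales
    using G.skel_graph G.skel_conn rt by auto
  have M4: "M \<ge> 4" using assms(7) by linarith
  show ?thesis by (rule H.transfer[OF refl refl M4 assms(9)])
qed

end
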